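(* Let $d\ge1$ and let $\Psi$, $B$, $b$ satisfy the standing assumptions (A1)–(A4) in the context. For $t\ge0$ and $V\in C^2(\mathbb{R}^d)$ define $$\mathcal L_t(V)(x)=-\langle\nabla V(x),B(t,x)\nabla\Psi(x)\rangle+\operatorname{div}\big(B(t,x)\nabla V(x)\big),$$ and let $V_a(x)=\exp(a(1+|x|^2)^{1/2})$. Then for every $a>0$ there exist $\lambda,\rho>0$ such that for all $t\ge0$ and all $x\in\mathbb{R}^d$, $$\mathcal L_t(V_a)(x)\le-\lambda V_a(x)+\rho.$$
   Context: $|\cdot|$ is the Euclidean norm on vectors and the operator norm on matrices; $a\vee b=\max\{a,b\}$; $\operatorname{div}B$ is the row-wise divergence $(\operatorname{div}B)_i=\sum_j\partial_{x_j}B_{ij}$, and $\operatorname{div}$ of a vector field is the usual divergence (taken in $x$). Standing assumptions: (A1) $\Psi\in C^2(\mathbb{R}^d)$, $\nabla\Psi$ $L$-Lipschitz, $\nabla\Psi(0)=0$. (A2) $B:[0,\infty)\times\mathbb{R}^d\to\mathbb{R}^{d\times d}$ symmetric with $\beta_lI\preceq B(t,x)\preceq\beta_uI$, $\beta_l,\beta_u>0$. (A3) $B$ is $C^2$ in $x$ and there are $L,n_B>0$, $\delta\ge1/2$ with, for all $x,y$, $s,t>0$: $|B(t,x)-B(t,y)|\vee|\operatorname{div}B(t,x)-\operatorname{div}B(t,y)|\le L(1+|x|^{n_B}+|y|^{n_B})|x-y|$ and $|B(s,x)-B(t,x)|\vee|\operatorname{div}B(s,x)-\operatorname{div}B(t,x)|\le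 L(1+|x|^{n_B})|s-t|^\delta$. (A4) $b(t,x)=-B(t,x)\nabla\Psi(x)+\operatorname{div}B(t,x)$ satisfies $\lim_{r\to\infty}\sup_{|x|\ge r,t\ge0}\langle\frac{x}{|x|},\frac{b(t,x)}{|b(t,x)|}\rangle<0$ and $\lim_{r\to\infty}\inf_{|x|\ge r,t\ge0}|b(t,x)|=\infty$. *)

theory Defs
  imports "HOL-Analysis.Analysis"
begin

text \<open>Vectors in R^d are rendered as real^'n (d = CARD('n) \<ge> 1);
  d x d matrices as real^'n^'n.\<close>

definition partial :: "(real^'n \<Rightarrow> real) \<Rightarrow> 'n \<Rightarrow> real^'n \<Rightarrow> real" where
  "partial f j x = deriv (\<lambda>s. f (x + s *\<^sub>R axis j 1)) 0"

definition has_partials :: "(real^'n \<Rightarrow> real) \<Rightarrow> bool" where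
  "has_partials f \<longleftrightarrow> (\<forall>j x. (\<lambda>s. f (x + s *\<^sub>R axis j 1)) field_differentiable (at 0))"

definition C1_fun :: "(real^'n \<Rightarrow> real) \<Rightarrow> bool" where
  "C1_fun f \<longleftrightarrow> continuous_on UNIV f \<and> has_partials f \<and> (\<forall>j. continuous_on UNIV (partial f j))"

definition C2_fun :: "(real^'n \<Rightarrow> real) \<Rightarrow> bool" where
  "C2_fun f \<longleftrightarrow> C1_fun f \<and> (\<forall>j. C1_fun (partial f j))"

definition grad :: "(real^'n \<Rightarrow> real) \<Rightarrow> real^'n \<Rightarrow> real^'n" where
  "grad f x = (\<chi> j. partial f j x)"

definition divergence :: "(real^'n \<Rightarrow> real^'n) \<Rightarrow> real^'n \<Rightarrow> real" where
  "divergence F x = (\<Sum>j\<in>UNIV. partial (\<lambda>y. F y $ j) j x)"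

text \<open>Row-wise divergence of a matrix field: (div B)_i = sum_j d_j B_ij.\<close>
definition divM :: "(real^'n \<Rightarrow> real^'n^'n) \<Rightarrow> real^'n \<Rightarrow> real^'n" where
  "divM M x = (\<chi> i. \<Sum>j\<in>UNIV. partial (\<lambda>y. M y $ i $ j) j x)"

definition opnorm :: "real^'n^'n \<Rightarrow> real" where
  "opnorm M = onorm (\<lambda>v. M *v v)"

definition drift :: "(real \<Rightarrow> real^'n \<Rightarrow> real^'n^'n) \<Rightarrow> (real^'n \<Rightarrow> real) \<Rightarrow> real \<Rightarrow> real^'n \<Rightarrow> real^'n" where
  "drift B \<Psi> t x = - (B t x *v grad \<Psi> x) + divM (B t) x"

definition genL :: "(real \<Rightarrow> real^'n \<Rightarrow> real^'n^'n) \<Rightarrow> (real^'n \<Rightarrow> real) \<Rightarrow> real \<Rightarrow> (real^'n \<Rightarrow> real) \<Rightarrow> real^'n \<Rightarrow> real" where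
  "genL B \<Psi> t V x = - (grad V x \<bullet> (B t x *v grad \<Psi> x)) + divergence (\<lambda>y. B t y *v grad V y) x"

definition Va :: "real \<Rightarrow> real^'n \<Rightarrow> real" where
  "Va a x = exp (a * sqrt (1 + (norm x)\<^sup>2))"

end

theory Submission
  imports Defs
begin

lemma partial_hasD:
  assumes "has_partials f"
  shows "((\<lambda>s. f (x + s *\<^sub>R axis j 1)) has_field_derivative partial f j x) (at 0)"
  using assms unfolding has_partials_def partial_def
  by (simp add: DERIV_deriv_iff_field_differentiable)

lemma partial_eqI:
  assumes "((\<lambda>s. f (x + s *\<^sub>R axis j 1)) has_field_derivative D) (at 0)"
  shows "partial f j x = D"
  using assms unfolding partial_def by (rule DERIV_imp_deriv)

lemma norm_line:
  fixes x :: "real^'n"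
  shows "1 + (norm (x + s *\<^sub>R axis j 1))\<^sup>2 = 1 + (norm x)\<^sup>2 + 2 * s * x$j + s\<^sup>2"
  unfolding power2_norm_eq_inner
  by (simp add: inner_add_left inner_add_right inner_axis inner_axis' power2_eq_square inner_commute)

lemma line_comp: "(x + s *\<^sub>R axis j (1::real)) $ k = x $ k + s * axis j 1 $ k"
  by simp

definition phi :: "real^'n \<Rightarrow> real" where "phi x = sqrt (1 + (norm x)\<^sup>2)"

lemma phi_ge1: "phi x \<ge> 1" unfolding phi_def by simp
lemma phi_pos: "phi x > 0" using phi_ge1[of x] by linarith

lemma phi_line_deriv:
  fixes x :: "real^'n"
  shows "((\<lambda>s. phi (x + s *\<^sub>R axis j 1)) has_field_derivative x$j / phi x) (at 0)"
proof -
  have e: "(\<lambda>s. phi (x + s *\<^sub>R axis j 1)) = (\<lambda>s. sqrt (1 + (norm x)\<^sup>2 + 2 * s * x$j + s\<^sup>2))"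
    unfolding phi_def norm_line ..
  have p: "0 < 1 + (norm x)\<^sup>2 + 2 * 0 * x$j + 0\<^sup>2" by (simp add: add_pos_nonneg)
  have Q: "((\<lambda>s. 1 + (norm x)\<^sup>2 + 2 * s * x$j + s\<^sup>2) has_real_derivative 2 * x$j) (at 0)"
    by (auto intro!: derivative_eq_intros)
  have "((\<lambda>s. sqrt (1 + (norm x)\<^sup>2 + 2 * s * x$j + s\<^sup>2)) has_real_derivative
      inverse (sqrt (1 + (norm x)\<^sup>2 + 2 * 0 * x$j + 0\<^sup>2)) / 2 * (2 * x$j)) (at 0)"
    by (rule DERIV_chain2[OF DERIV_real_sqrt[OF p] Q])
  then show ?thesis unfolding e by (simp add: phi_def divide_simps)
qed

lemma phi_line_deriv':
  fixes x :: "real^'n"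
  shows "D = x$j / phi x \<Longrightarrow> ((\<lambda>s. phi (x + s *\<^sub>R axis j 1)) has_field_derivative D) (at 0)"
  using phi_line_deriv by simp

lemma Va_phi: "Va a x = exp (a * phi x)" unfolding Va_def phi_def ..

definition cc :: "real \<Rightarrow> real^'n \<Rightarrow> real" where "cc a x = a * Va a x / phi x"
definition gam :: "real \<Rightarrow> real^'n \<Rightarrow> real" where
  "gam a x = a * Va a x * (a / (phi x)\<^sup>2 - 1 / (phi x)^3)"

lemma Va_line_deriv:
  fixes x :: "real^'n"
  shows "((\<lambda>s. Va a (x + s *\<^sub>R axis j 1)) has_field_derivative cc a x * x$j) (at 0)"
  unfolding Va_phi cc_def
  by (auto intro!: derivative_eq_intros phi_line_deriv' simp: divide_simps)

lemma partial_Va: "partial (Va a) k y = cc a y * y $ k"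
  by (rule partial_eqI[OF Va_line_deriv])

lemma grad_Va: "grad (Va a) y = cc a y *\<^sub>R y"
  by (simp add: grad_def partial_Va vec_eq_iff)

lemma cc_line_deriv:
  fixes x :: "real^'n"
  shows "((\<lambda>s. cc a (x + s *\<^sub>R axis j 1)) has_field_derivative gam a x * x$j) (at 0)"
proof -
  have "((\<lambda>s. a * Va a (x + s *\<^sub>R axis j 1) / phi (x + s *\<^sub>R axis j 1)) has_field_derivative
     (a * (cc a x * x$j) * phi x - a * Va a x * (x$j / phi x)) / (phi x * phi x)) (at 0)"
    using DERIV_divide[OF DERIV_cmult[OF Va_line_deriv[of a x j]] phi_line_deriv[of x j]] phi_pos[of x]
    by simp
  moreover have "(a * (cc a x * x$j) * phi x - a * Va a x * (x$j / phi x)) / (phi x * phi x) = gam a x * x$j"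
    using phi_pos[of x] unfolding cc_def gam_def by (simp add: field_simps power2_eq_square power3_eq_cube)
  ultimately show ?thesis unfolding cc_def by simp
qed

lemma coord_line_deriv:
  fixes x :: "real^'n"
  shows "((\<lambda>s. (x + s *\<^sub>R axis j 1) $ k) has_field_derivative axis j 1 $ k) (at 0)"
  by (auto intro!: derivative_eq_intros)

lemma div_term:
  fixes M :: "real^'n \<Rightarrow> real^'n^'n"
  assumes hp: "\<forall>i j. has_partials (\<lambda>y. M y $ i $ j)"
  shows "partial (\<lambda>y. (M y *v grad (Va a) y) $ j) j x =
     (\<Sum>k\<in>UNIV. partial (\<lambda>y. M y $ j $ k) j x * (cc a x * x$k)
        + M x $ j $ k * (gam a x * x$j * x$k + cc a x * axis j 1 $ k))"
proof (rule partial_eqI)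
  have e: "(\<lambda>s. (M (x + s *\<^sub>R axis j 1) *v grad (Va a) (x + s *\<^sub>R axis j 1)) $ j) =
    (\<lambda>s. \<Sum>k\<in>UNIV. M (x + s *\<^sub>R axis j 1) $ j $ k * (cc a (x + s *\<^sub>R axis j 1) * (x + s *\<^sub>R axis j 1) $ k))"
    by (simp add: grad_Va matrix_vector_mult_def)
  have "((\<lambda>s. \<Sum>k\<in>UNIV. M (x + s *\<^sub>R axis j 1) $ j $ k * (cc a (x + s *\<^sub>R axis j 1) * (x + s *\<^sub>R axis j 1) $ k))
     has_field_derivative (\<Sum>k\<in>UNIV. partial (\<lambda>y. M y $ j $ k) j x * (cc a (x + 0 *\<^sub>R axis j 1) * (x + 0 *\<^sub>R axis j 1) $ k)
        + (gam a x * x$j * (x + 0 *\<^sub>R axis j 1) $ k + axis j 1 $ k * cc a (x + 0 *\<^sub>R axis j 1)) * M (x + 0 *\<^sub>R axis j 1) $ j $ k)) (at 0)"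
    apply (rule DERIV_sum)
    apply (rule DERIV_mult)
     apply (rule partial_hasD[of "\<lambda>y. M y $ j $ _", simplified])
    using hp apply blast
    apply (rule DERIV_mult[OF cc_line_deriv coord_line_deriv])
    done
  then show "((\<lambda>s. (M (x + s *\<^sub>R axis j 1) *v grad (Va a) (x + s *\<^sub>R axis j 1)) $ j) has_field_derivative
     (\<Sum>k\<in>UNIV. partial (\<lambda>y. M y $ j $ k) j x * (cc a x * x$k)
        + M x $ j $ k * (gam a x * x$j * x$k + cc a x * axis j 1 $ k))) (at 0)"
    unfolding e by (simp add: algebra_simps)
qed

lemma genL_identity:
  fixes M :: "real^'n \<Rightarrow> real^'n^'n" and g :: "real^'n"
  assumes hp: "\<forall>i j. has_partials (\<lambda>y. M y $ i $ j)"
    and sym: "\<forall>y. transpose (M y) = M y"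
  shows "- (grad (Va a) x \<bullet> (M x *v g)) + divergence (\<lambda>y. M y *v grad (Va a) y) x
     = cc a x * (x \<bullet> (- (M x *v g) + divM M x)) + cc a x * (\<Sum>j\<in>UNIV. M x $ j $ j)
       + gam a x * (x \<bullet> (M x *v x))"
proof -
  have symc: "\<And>j k. (\<lambda>y. M y $ j $ k) = (\<lambda>y. M y $ k $ j)"
  proof -
    fix j k
    show "(\<lambda>y. M y $ j $ k) = (\<lambda>y. M y $ k $ j)"
    proof
      fix y
      have "transpose (M y) $ k $ j = M y $ k $ j" using sym by simp
      then show "M y $ j $ k = M y $ k $ j" by (simp add: transpose_def)
    qed
  qed
  have dv: "divergence (\<lambda>y. M y *v grad (Va a) y) x =
     (\<Sum>j\<in>UNIV. \<Sum>k\<in>UNIV. partial (\<lambda>y. M y $ j $ k) j x * (cc a x * x$k)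
        + M x $ j $ k * (gam a x * x$j * x$k + cc a x * axis j 1 $ k))"
    unfolding divergence_def using div_term[OF hp] by simp
  also have "\<dots> = (\<Sum>j\<in>UNIV. \<Sum>k\<in>UNIV. partial (\<lambda>y. M y $ j $ k) j x * (cc a x * x$k))
     + (\<Sum>j\<in>UNIV. \<Sum>k\<in>UNIV. gam a x * (x$j * (M x $ j $ k * x$k)))
     + (\<Sum>j\<in>UNIV. \<Sum>k\<in>UNIV. cc a x * (M x $ j $ k * axis j 1 $ k))"
    by (simp add: sum.distrib algebra_simps)
  also have "(\<Sum>j\<in>UNIV. \<Sum>k\<in>UNIV. partial (\<lambda>y. M y $ j $ k) j x * (cc a x * x$k))
      = cc a x * (x \<bullet> divM M x)"
    unfolding divM_def inner_vec_def
    apply (subst sum.swap)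
    apply (simp add: sum_distrib_left sum_distrib_right symc algebra_simps)
    done
  also have "(\<Sum>j\<in>UNIV. \<Sum>k\<in>UNIV. gam a x * (x$j * (M x $ j $ k * x$k))) = gam a x * (x \<bullet> (M x *v x))"
    unfolding inner_vec_def matrix_vector_mult_def
    by (simp add: sum_distrib_left)
  also have "(\<Sum>j\<in>UNIV. \<Sum>k\<in>UNIV. cc a x * (M x $ j $ k * axis j 1 $ k)) = cc a x * (\<Sum>j\<in>UNIV. M x $ j $ j)"
  proof -
    have "\<And>j. (\<Sum>k\<in>UNIV. cc a x * (M x $ j $ k * axis j 1 $ k)) = cc a x * M x $ j $ j"
    proof -
      fix j
      have "(\<Sum>k\<in>UNIV. cc a x * (M x $ j $ k * axis j 1 $ k)) = (\<Sum>k\<in>UNIV. if k = j then cc a x * M x $ j $ k else 0)"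
        by (rule sum.cong) (auto simp: axis_def)
      then show "(\<Sum>k\<in>UNIV. cc a x * (M x $ j $ k * axis j 1 $ k)) = cc a x * M x $ j $ j"
        by (simp add: sum.delta')
    qed
    then show ?thesis by (simp add: sum_distrib_left)
  qed
  finally have dv2: "divergence (\<lambda>y. M y *v grad (Va a) y) x = cc a x * (x \<bullet> divM M x) + gam a x * (x \<bullet> (M x *v x))
     + cc a x * (\<Sum>j\<in>UNIV. M x $ j $ j)" .
  show ?thesis unfolding dv2
    by (simp add: grad_Va inner_add_right algebra_simps)
qed

lemma phi_sq: "(phi x)\<^sup>2 = 1 + (norm x)\<^sup>2" unfolding phi_def by simp

lemma diag_quad: "axis j 1 \<bullet> (M *v axis j (1::real)) = (M::real^'n^'n) $ j $ j"
proof -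
  have "(M *v axis j (1::real)) $ j = (\<Sum>k\<in>UNIV. M $ j $ k * axis j 1 $ k)"
    unfolding matrix_vector_mult_def by simp
  also have "\<dots> = (\<Sum>k\<in>UNIV. if k = j then M $ j $ k else 0)"
    by (rule sum.cong) (auto simp: axis_def)
  finally have "(M *v axis j (1::real)) $ j = (\<Sum>k\<in>UNIV. if k = j then M $ j $ k else 0)" .
  then show ?thesis by (simp add: inner_axis' sum.delta')
qed

lemma genL_bound_aux:
  fixes M :: "real^'n^'n" and x :: "real^'n"
  assumes a: "a > 0" and bl: "\<beta>l > 0"
    and bnd: "\<forall>v. \<beta>l * (v \<bullet> v) \<le> v \<bullet> (M *v v) \<and> v \<bullet> (M *v v) \<le> \<beta>u * (v \<bullet> v)"
  shows "cc a x * X + cc a x * (\<Sum>j\<in>UNIV. M $ j $ j) + gam a x * (x \<bullet> (M *v x))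
     \<le> Va a x * (a / phi x * X + a * real CARD('n) * \<beta>u + a\<^sup>2 * \<beta>u)"
proof -
  let ?V = "Va a x" and ?p = "phi x" and ?q = "x \<bullet> (M *v x)"
  have V: "?V > 0" unfolding Va_def by simp
  have p1: "?p \<ge> 1" by (rule phi_ge1)
  have bu: "\<beta>u \<ge> 0" using bnd[rule_format, of "axis undefined 1"] bl
    by (simp add: inner_axis_axis) 
  have tr: "(\<Sum>j\<in>UNIV. M $ j $ j) \<le> real CARD('n) * \<beta>u"
  proof -
    have "\<And>j. M $ j $ j \<le> \<beta>u"
      using bnd diag_quad by (metis inner_axis_axis inner_real_def mult.right_neutral mult_1)
    then have "(\<Sum>j\<in>UNIV. M $ j $ j) \<le> (\<Sum>j\<in>(UNIV::'n set). \<beta>u)" by (rule sum_mono)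
    then show ?thesis by simp
  qed
  have cc_le: "cc a x \<le> a * ?V" "cc a x \<ge> 0"
    unfolding cc_def using a V p1 phi_pos[of x] by (auto simp: divide_simps mult_le_cancel_left_pos)
  have t2: "cc a x * (\<Sum>j\<in>UNIV. M $ j $ j) \<le> ?V * (a * real CARD('n) * \<beta>u)"
  proof -
    have "cc a x * (\<Sum>j\<in>UNIV. M $ j $ j) \<le> cc a x * (real CARD('n) * \<beta>u)"
      using tr cc_le(2) by (rule mult_left_mono)
    also have "\<dots> \<le> (a * ?V) * (real CARD('n) * \<beta>u)"
      using cc_le(1) bu by (intro mult_right_mono) auto
    finally show ?thesis by (simp add: algebra_simps)
  qed
  have q0: "?q \<ge> 0" using bnd[rule_format, of x] bl by (meson inner_ge_zero mult_nonneg_nonneg order_trans less_imp_le)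
  have qu: "?q \<le> \<beta>u * (norm x)\<^sup>2" using bnd[rule_format, of x] by (simp add: power2_norm_eq_inner)
  have t3: "gam a x * ?q \<le> ?V * (a\<^sup>2 * \<beta>u)"
  proof -
    have "gam a x * ?q = a\<^sup>2 * ?V * ?q / ?p\<^sup>2 - a * ?V * ?q / ?p^3"
      unfolding gam_def using phi_pos[of x] by (simp add: field_simps power2_eq_square)
    also have "\<dots> \<le> a\<^sup>2 * ?V * ?q / ?p\<^sup>2"
      using a V q0 phi_pos[of x] by simp
    also have "\<dots> \<le> a\<^sup>2 * ?V * (\<beta>u * ?p\<^sup>2) / ?p\<^sup>2"
    proof -
      have "?q \<le> \<beta>u * ?p\<^sup>2" using qu bu unfolding phi_sq
        by (smt (verit) mult_left_mono)
      then show ?thesis using a V phi_pos[of x] by (intro divide_right_mono mult_left_mono) auto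
    qed
    also have "\<dots> = ?V * (a\<^sup>2 * \<beta>u)" using phi_pos[of x] by simp
    finally show ?thesis .
  qed
  have t1: "cc a x * X = ?V * (a / ?p * X)" unfolding cc_def by simp
  show ?thesis using t1 t2 t3 by (simp add: algebra_simps)
qed

lemma sym_swap:
  fixes M :: "real^'n^'n"
  assumes "transpose M = M"
  shows "w \<bullet> (M *v x) = x \<bullet> (M *v w)"
proof -
  have "w \<bullet> (M *v x) = (w v* M) \<bullet> x" by (simp add: dot_lmul_matrix)
  also have "w v* M = M *v w" using vector_transpose_matrix[of w M] assms by simp
  finally show ?thesis by (simp add: inner_commute)
qed

lemma polar:
  fixes M :: "real^'n^'n"
  assumes sym: "transpose M = M" and up: "\<forall>v. v \<bullet> (M *v v) \<le> bu * (v \<bullet> v)"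
    and lo: "\<forall>v. 0 \<le> v \<bullet> (M *v v)"
  shows "\<bar>x \<bullet> (M *v w)\<bar> \<le> bu / 2 * ((norm x)\<^sup>2 + (norm w)\<^sup>2)"
proof -
  have sw: "w \<bullet> (M *v x) = x \<bullet> (M *v w)" by (rule sym_swap[OF sym])
  have e1: "(x + w) \<bullet> (M *v (x + w)) = x \<bullet> (M *v x) + 2 * (x \<bullet> (M *v w)) + w \<bullet> (M *v w)"
    by (simp add: matrix_vector_right_distrib inner_add_left inner_add_right sw)
  have e2: "(x - w) \<bullet> (M *v (x - w)) = x \<bullet> (M *v x) - 2 * (x \<bullet> (M *v w)) + w \<bullet> (M *v w)"
    by (simp add: matrix_vector_mult_diff_distrib inner_diff_left inner_diff_right sw)
  have n1: "(x + w) \<bullet> (x + w) + (x - w) \<bullet> (x - w) = 2 * (x \<bullet> x + w \<bullet> w)"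
    by (simp add: inner_add_left inner_add_right inner_diff_left inner_diff_right inner_commute)
  have g1: "(x + w) \<bullet> (x + w) \<ge> 0" "(x - w) \<bullet> (x - w) \<ge> 0" by simp_all
  have bu: "bu \<ge> 0 \<or> (x + w) \<bullet> (x + w) = 0 \<and> (x - w) \<bullet> (x - w) = 0"
  proof (cases "bu \<ge> 0")
    case False
    have "\<And>v::real^'n. v \<bullet> v \<le> 0 \<Longrightarrow> v \<bullet> v = 0" by (meson inner_ge_zero order_antisym)
    moreover have "\<And>v::real^'n. v \<bullet> v \<le> 0"
    proof -
      fix v :: "real^'n"
      have "0 \<le> bu * (v \<bullet> v)" using up lo order_trans by blast
      then show "v \<bullet> v \<le> 0" using False by (simp add: zero_le_mult_iff)
    qed
    ultimately show ?thesis by blast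
  qed simp
  have h: "(x + w) \<bullet> (x + w) \<le> 2 * (x \<bullet> x + w \<bullet> w)" "(x - w) \<bullet> (x - w) \<le> 2 * (x \<bullet> x + w \<bullet> w)"
    using n1 g1 by linarith+
  have A: "(x + w) \<bullet> (M *v (x + w)) \<le> bu * (2 * (x \<bullet> x + w \<bullet> w))"
  proof -
    have "(x + w) \<bullet> (M *v (x + w)) \<le> bu * ((x + w) \<bullet> (x + w))" using up by blast
    also have "\<dots> \<le> bu * (2 * (x \<bullet> x + w \<bullet> w))"
      using bu n1 h by (auto intro: mult_left_mono)
    finally show ?thesis .
  qed
  have B: "(x - w) \<bullet> (M *v (x - w)) \<le> bu * (2 * (x \<bullet> x + w \<bullet> w))"
  proof -
    have "(x - w) \<bullet> (M *v (x - w)) \<le> bu * ((x - w) \<bullet> (x - w))" using up by blast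
    also have "\<dots> \<le> bu * (2 * (x \<bullet> x + w \<bullet> w))"
      using bu n1 h by (auto intro: mult_left_mono)
    finally show ?thesis .
  qed
  have C: "0 \<le> (x + w) \<bullet> (M *v (x + w))" "0 \<le> (x - w) \<bullet> (M *v (x - w))" using lo by blast+
  have "4 * (x \<bullet> (M *v w)) = (x + w) \<bullet> (M *v (x + w)) - (x - w) \<bullet> (M *v (x - w))"
    using e1 e2 by simp
  then have "\<bar>4 * (x \<bullet> (M *v w))\<bar> \<le> bu * (2 * (x \<bullet> x + w \<bullet> w))"
    using A B C by linarith
  then have "\<bar>x \<bullet> (M *v w)\<bar> * 4 \<le> bu * 2 * (x \<bullet> x + w \<bullet> w)" by (simp add: abs_mult algebra_simps)
  then show ?thesis by (simp add: power2_norm_eq_inner field_simps)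
qed

lemma unit_inner_le1:
  fixes x y :: "real^'n"
  shows "((1 / norm x) *\<^sub>R x) \<bullet> ((1 / norm y) *\<^sub>R y) \<le> 1"
proof -
  have nx: "norm ((1 / norm x) *\<^sub>R x) \<le> 1" by (cases "x = 0") auto
  have ny: "norm ((1 / norm y) *\<^sub>R y) \<le> 1" by (cases "y = 0") auto
  have "((1 / norm x) *\<^sub>R x) \<bullet> ((1 / norm y) *\<^sub>R y) \<le> norm ((1 / norm x) *\<^sub>R x) * norm ((1 / norm y) *\<^sub>R y)"
    by (rule norm_cauchy_schwarz)
  also have "\<dots> \<le> 1 * 1" using nx ny by (intro mult_mono) auto
  finally show ?thesis by simp
qed

lemma inner_via_unit:
  fixes x y :: "real^'n"
  assumes "x \<noteq> 0" "y \<noteq> 0"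
  shows "x \<bullet> y = norm x * norm y * (((1 / norm x) *\<^sub>R x) \<bullet> ((1 / norm y) *\<^sub>R y))"
  using assms by simp

lemma aux_neg: fixes K q :: real assumes "K \<ge> 0" "q \<ge> 1/2" shows "-2*(K+1)*q \<le> -(K+1)"
proof -
  have "(K+1)*(1/2) \<le> (K+1)*q" using assms by (intro mult_left_mono) auto
  then show ?thesis by (simp add: algebra_simps)
qed


theorem lemma4:
  fixes \<Psi> :: "real^'n \<Rightarrow> real"
    and B :: "real \<Rightarrow> real^'n \<Rightarrow> real^'n^'n"
    and L nB \<delta> \<beta>l \<beta>u :: real
  assumes A1_C2: "C2_fun \<Psi>"
    and A1_Lip: "\<forall>x y. norm (grad \<Psi> x - grad \<Psi> y) \<le> L * norm (x - y)"
    and A1_zero: "grad \<Psi> 0 = 0"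
    and A2_sym: "\<forall>t\<ge>0. \<forall>x. transpose (B t x) = B t x"
    and A2_pos: "\<beta>l > 0" "\<beta>u > 0"
    and A2_bounds: "\<forall>t\<ge>0. \<forall>x v. \<beta>l * (v \<bullet> v) \<le> v \<bullet> (B t x *v v) \<and> v \<bullet> (B t x *v v) \<le> \<beta>u * (v \<bullet> v)"
    and A3_C2: "\<forall>t\<ge>0. \<forall>i j. C2_fun (\<lambda>x. B t x $ i $ j)"
    and A3_pos: "L > 0" "nB > 0" "\<delta> \<ge> 1/2"
    and A3_space: "\<forall>t>0. \<forall>x y.
        max (opnorm (B t x - B t y)) (norm (divM (B t) x - divM (B t) y))
          \<le> L * (1 + norm x powr nB + norm y powr nB) * norm (x - y)"
    and A3_time: "\<forall>s>0. \<forall>t>0. \<forall>x.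
        max (opnorm (B s x - B t x)) (norm (divM (B s) x - divM (B t) x))
          \<le> L * (1 + norm x powr nB) * \<bar>s - t\<bar> powr \<delta>"
    and A4_dir: "\<exists>l<0. ((\<lambda>r. Sup {((1 / norm x) *\<^sub>R x) \<bullet> ((1 / norm (drift B \<Psi> t x)) *\<^sub>R drift B \<Psi> t x)
                              | x t. norm x \<ge> r \<and> t \<ge> 0}) \<longlongrightarrow> l) at_top"
    and A4_mag: "filterlim (\<lambda>r. Inf {norm (drift B \<Psi> t x) | x t. norm x \<ge> r \<and> t \<ge> 0}) at_top at_top"
  shows "\<forall>a>0. \<exists>lam>0. \<exists>\<rho>>0. \<forall>t\<ge>0. \<forall>x.
           genL B \<Psi> t (Va a) x \<le> - lam * Va a x + \<rho>"
proof (intro allI impI)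
  fix a :: real assume a: "a > 0"
  define K where "K = a * real CARD('n) * \<beta>u + a\<^sup>2 * \<beta>u"
  have K0: "K \<ge> 0" using A2_pos a by (simp add: K_def)
  have hpB: "\<forall>t\<ge>0. \<forall>i j. has_partials (\<lambda>x. B t x $ i $ j)"
    using A3_C2 by (simp add: C2_fun_def C1_fun_def)
  have key: "\<forall>t\<ge>0. \<forall>x. genL B \<Psi> t (Va a) x \<le> Va a x * (a / phi x * (x \<bullet> drift B \<Psi> t x) + K)"
  proof (intro allI impI)
    fix t :: real and x :: "real^'n" assume t: "t \<ge> 0"
    have "genL B \<Psi> t (Va a) x = cc a x * (x \<bullet> drift B \<Psi> t x) + cc a x * (\<Sum>j\<in>UNIV. B t x $ j $ j)
         + gam a x * (x \<bullet> (B t x *v x))"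
      unfolding genL_def drift_def by (rule genL_identity) (use hpB A2_sym t in auto)
    also have "\<dots> \<le> Va a x * (a / phi x * (x \<bullet> drift B \<Psi> t x) + a * real CARD('n) * \<beta>u + a\<^sup>2 * \<beta>u)"
      by (rule genL_bound_aux[OF a A2_pos(1)]) (use A2_bounds t in auto)
    also have "\<dots> = Va a x * (a / phi x * (x \<bullet> drift B \<Psi> t x) + K)" by (simp add: K_def algebra_simps)
    finally show "genL B \<Psi> t (Va a) x \<le> Va a x * (a / phi x * (x \<bullet> drift B \<Psi> t x) + K)" .
  qed
  obtain l where l: "l < 0" and lt: "((\<lambda>r. Sup {((1 / norm x) *\<^sub>R x) \<bullet> ((1 / norm (drift B \<Psi> t x)) *\<^sub>R drift B \<Psi> t x)
                              | x t. norm x \<ge> r \<and> t \<ge> 0}) \<longlongrightarrow> l) at_top"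
    using A4_dir by blast
  have "eventually (\<lambda>r. Sup {((1 / norm x) *\<^sub>R x) \<bullet> ((1 / norm (drift B \<Psi> t x)) *\<^sub>R drift B \<Psi> t x)
                              | x t. norm x \<ge> r \<and> t \<ge> 0} < l / 2) at_top"
    using order_tendstoD(2)[OF lt, of "l / 2"] l by linarith
  then obtain r1 where r1: "\<And>r. r \<ge> r1 \<Longrightarrow> Sup {((1 / norm x) *\<^sub>R x) \<bullet> ((1 / norm (drift B \<Psi> t x)) *\<^sub>R drift B \<Psi> t x)
                              | x t. norm x \<ge> r \<and> t \<ge> 0} < l / 2"
    unfolding eventually_at_top_linorder by blast
  have dir: "((1 / norm x) *\<^sub>R x) \<bullet> ((1 / norm (drift B \<Psi> t x)) *\<^sub>R drift B \<Psi> t x) < l / 2"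
    if "t \<ge> 0" "norm x \<ge> r1" for t x
  proof -
    let ?S = "{((1 / norm x) *\<^sub>R x) \<bullet> ((1 / norm (drift B \<Psi> t x)) *\<^sub>R drift B \<Psi> t x)
                              | x t. norm x \<ge> r1 \<and> t \<ge> 0}"
    have mem: "((1 / norm x) *\<^sub>R x) \<bullet> ((1 / norm (drift B \<Psi> t x)) *\<^sub>R drift B \<Psi> t x) \<in> ?S"
      using that by blast
    have bdd: "bdd_above ?S" by (rule bdd_aboveI[of _ 1]) (blast intro: unit_inner_le1)
    have "r1 \<le> r1" by simp
    from r1[OF this] show ?thesis using cSup_upper[OF mem bdd] by linarith
  qed
  define Mm where "Mm = 4 * (K + 1) / (a * (- l))"
  have Mm0: "Mm > 0" unfolding Mm_def using K0 a l by (intro divide_pos_pos mult_pos_pos) auto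
  have "eventually (\<lambda>r. Mm \<le> Inf {norm (drift B \<Psi> t x) | x t. norm x \<ge> r \<and> t \<ge> 0}) at_top"
    using A4_mag unfolding filterlim_at_top by blast
  then obtain r2 where r2: "\<And>r. r \<ge> r2 \<Longrightarrow> Mm \<le> Inf {norm (drift B \<Psi> t x) | x t. norm x \<ge> r \<and> t \<ge> 0}"
    unfolding eventually_at_top_linorder by blast
  have mag: "Mm \<le> norm (drift B \<Psi> t x)" if "t \<ge> 0" "norm x \<ge> r2" for t x
  proof -
    let ?S = "{norm (drift B \<Psi> t x) | x t. norm x \<ge> r2 \<and> t \<ge> 0}"
    have mem: "norm (drift B \<Psi> t x) \<in> ?S" using that by blast
    have bdd: "bdd_below ?S" by (rule bdd_belowI[of _ 0]) auto
    have "r2 \<le> r2" by simp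
    from r2[OF this] show ?thesis using cInf_lower[OF mem bdd] by linarith
  qed
  define R where "R = max 1 (max r1 r2)"
  have R1: "R \<ge> 1" unfolding R_def by simp
  have far: "x \<bullet> drift B \<Psi> t x \<le> l / 2 * norm x * Mm" if "t \<ge> 0" "norm x \<ge> R" for t x
  proof -
    let ?b = "drift B \<Psi> t x"
    let ?u = "((1 / norm x) *\<^sub>R x) \<bullet> ((1 / norm ?b) *\<^sub>R ?b)"
    have nx: "norm x \<ge> 1" "norm x \<ge> r1" "norm x \<ge> r2" using that R_def by auto
    have mb: "Mm \<le> norm ?b" using mag[OF that(1) nx(3)] .
    have x0: "x \<noteq> 0" using nx(1) by auto
    have b0: "?b \<noteq> 0" using mb Mm0 by auto
    have u: "?u \<le> l / 2" using dir[OF that(1) nx(2)] by simp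
    have "x \<bullet> ?b = norm x * norm ?b * ?u" by (rule inner_via_unit[OF x0 b0])
    also have "\<dots> \<le> norm x * norm ?b * (l / 2)" using u by (intro mult_left_mono) auto
    also have "\<dots> \<le> norm x * Mm * (l / 2)" using l mb by (intro mult_right_mono_neg mult_left_mono) auto
    finally show ?thesis by (simp add: algebra_simps)
  qed
  have farG: "genL B \<Psi> t (Va a) x \<le> - Va a x" if "t \<ge> 0" "norm x \<ge> R" for t x
  proof -
    have nx: "norm x \<ge> 1" using that R1 by linarith
    have p2: "phi x \<le> 2 * norm x"
    proof (rule power2_le_imp_le)
      show "(phi x)\<^sup>2 \<le> (2 * norm x)\<^sup>2" unfolding phi_sq using nx
      proof -
        have "1 \<le> norm x * norm x" using nx mult_mono[OF nx nx] by simp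
        then show "1 + (norm x)\<^sup>2 \<le> (2 * norm x)\<^sup>2" by (simp add: power2_eq_square)
      qed
    qed simp
    have pp: "phi x > 0" by (rule phi_pos)
    have "a / phi x * (x \<bullet> drift B \<Psi> t x) \<le> a / phi x * (l / 2 * norm x * Mm)"
      using far[OF that] a pp by (intro mult_left_mono) auto
    also have "\<dots> = - 2 * (K + 1) * (norm x / phi x)"
      unfolding Mm_def using a l pp by (simp add: field_simps)
    also have "\<dots> \<le> - (K + 1)"
    proof -
      have "norm x / phi x \<ge> 1 / 2" using p2 pp by (simp add: field_simps)
      then show ?thesis using aux_neg[OF K0] by blast
    qed
    finally have "a / phi x * (x \<bullet> drift B \<Psi> t x) + K \<le> -1" by simp
    then have "Va a x * (a / phi x * (x \<bullet> drift B \<Psi> t x) + K) \<le> Va a x * (-1)"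
      by (intro mult_left_mono) (auto simp: Va_def)
    then show ?thesis using key that by (smt (verit))
  qed

  have gP: "norm (grad \<Psi> x) \<le> L * norm x" for x
    using A1_Lip A1_zero by (metis diff_zero)
  have polB: "\<bar>y \<bullet> (B t x *v w)\<bar> \<le> \<beta>u / 2 * ((norm y)\<^sup>2 + (norm w)\<^sup>2)" if "t \<ge> 0" for t x y w
  proof (rule polar)
    show "transpose (B t x) = B t x" using A2_sym that by blast
    show "\<forall>v. v \<bullet> (B t x *v v) \<le> \<beta>u * (v \<bullet> v)" using A2_bounds that by blast
    show "\<forall>v. 0 \<le> v \<bullet> (B t x *v v)"
    proof
      fix v :: "real^'n"
      have "0 \<le> \<beta>l * (v \<bullet> v)" using A2_pos by simp
      then show "0 \<le> v \<bullet> (B t x *v v)" using A2_bounds that by (meson order_trans)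
    qed
  qed
  define C0 where "C0 = \<beta>u / 2 * (R\<^sup>2 + (L * R)\<^sup>2)"
  have C00: "C0 \<ge> 0" unfolding C0_def using A2_pos by simp
  have psiT: "\<bar>x \<bullet> (B t x *v grad \<Psi> x)\<bar> \<le> C0" if "t \<ge> 0" "norm x \<le> R" for t x
  proof -
    have g: "norm (grad \<Psi> x) \<le> L * R"
      using gP[of x] that(2) A3_pos(1) by (meson mult_left_mono order_trans less_imp_le)
    have s1: "(norm x)\<^sup>2 \<le> R\<^sup>2" using that(2) by (intro power_mono) auto
    have s2: "(norm (grad \<Psi> x))\<^sup>2 \<le> (L * R)\<^sup>2" using g by (intro power_mono) auto
    have "\<bar>x \<bullet> (B t x *v grad \<Psi> x)\<bar> \<le> \<beta>u / 2 * ((norm x)\<^sup>2 + (norm (grad \<Psi> x))\<^sup>2)"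
      by (rule polB[OF that(1)])
    also have "\<dots> \<le> C0" unfolding C0_def using s1 s2 A2_pos by (intro mult_left_mono) auto
    finally show ?thesis .
  qed
  define C1 where "C1 = C0 + R * (L * (1 + 2 * R powr nB) * (2 * R))"
  have C1pos: "0 \<le> R * (L * (1 + 2 * R powr nB) * (2 * R))" using R1 A3_pos by simp
  have divpos: "x \<bullet> divM (B t) x \<le> C1" if "t > 0" "norm x \<le> R" for t x
  proof (cases "x = 0")
    case True
    then show ?thesis unfolding C1_def using C00 C1pos by simp
  next
    case False
    define y where "y = (R / norm x) *\<^sub>R x"
    have nx0: "norm x > 0" using False by simp
    have ny: "norm y = R" using False R1 unfolding y_def by simp
    have fy: "y \<bullet> drift B \<Psi> t y \<le> 0"
    proof -
      have "y \<bullet> drift B \<Psi> t y \<le> l / 2 * norm y * Mm" using far[of t y] that(1) ny by simp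
      also have "\<dots> \<le> 0" using l Mm0 by (intro mult_nonpos_nonneg) auto
      finally show ?thesis .
    qed
    have dy: "y \<bullet> divM (B t) y \<le> C0"
    proof -
      have "y \<bullet> drift B \<Psi> t y = - (y \<bullet> (B t y *v grad \<Psi> y)) + y \<bullet> divM (B t) y"
        by (simp add: drift_def inner_add_right inner_minus_right inner_diff_right)
      then show ?thesis using fy psiT[of t y] that(1) ny by linarith
    qed
    have "x \<bullet> divM (B t) y = (norm x / R) * (y \<bullet> divM (B t) y)"
      unfolding y_def using nx0 R1 by (simp add: field_simps)
    also have "\<dots> \<le> (norm x / R) * C0" using dy nx0 R1 by (intro mult_left_mono) auto
    also have "\<dots> \<le> C0" using C00 nx0 R1 that(2) by (intro mult_left_le_one_le) auto
    finally have t1: "x \<bullet> divM (B t) y \<le> C0" .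
    have "max (opnorm (B t x - B t y)) (norm (divM (B t) x - divM (B t) y))
          \<le> L * (1 + norm x powr nB + norm y powr nB) * norm (x - y)" using A3_space that(1) by blast
    then have dd: "norm (divM (B t) x - divM (B t) y) \<le> L * (1 + norm x powr nB + norm y powr nB) * norm (x - y)"
      by simp
    have pw: "norm x powr nB \<le> R powr nB" using that(2) A3_pos(2) by (intro powr_mono2) auto
    have nxy: "norm (x - y) \<le> 2 * R" using norm_triangle_ineq4[of x y] that(2) ny by linarith
    have "L * (1 + norm x powr nB + norm y powr nB) * norm (x - y) \<le> L * (1 + 2 * R powr nB) * (2 * R)"
    proof (rule mult_mono)
      show "L * (1 + norm x powr nB + norm y powr nB) \<le> L * (1 + 2 * R powr nB)"
        using pw ny A3_pos(1) by (intro mult_left_mono) auto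
      show "0 \<le> L * (1 + 2 * R powr nB)" using A3_pos(1) by simp
    qed (use nxy in auto)
    with dd have dd2: "norm (divM (B t) x - divM (B t) y) \<le> L * (1 + 2 * R powr nB) * (2 * R)" by linarith
    have "x \<bullet> (divM (B t) x - divM (B t) y) \<le> norm x * norm (divM (B t) x - divM (B t) y)"
      by (rule norm_cauchy_schwarz)
    also have "\<dots> \<le> R * (L * (1 + 2 * R powr nB) * (2 * R))"
      using that(2) dd2 R1 by (intro mult_mono) auto
    finally have t2: "x \<bullet> (divM (B t) x - divM (B t) y) \<le> R * (L * (1 + 2 * R powr nB) * (2 * R))" .
    have "x \<bullet> divM (B t) x = x \<bullet> divM (B t) y + x \<bullet> (divM (B t) x - divM (B t) y)"
      by (simp add: inner_diff_right)
    then show ?thesis unfolding C1_def using t1 t2 by linarith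
  qed
  have div0: "\<exists>C2. \<forall>x. norm x \<le> R \<longrightarrow> x \<bullet> divM (B 0) x \<le> C2"
  proof -
    have eq: "(\<lambda>x. x \<bullet> divM (B 0) x) = (\<lambda>x. \<Sum>i\<in>UNIV. x $ i * (\<Sum>j\<in>UNIV. partial (\<lambda>y. B 0 y $ i $ j) j x))"
      by (simp add: inner_vec_def divM_def)
    have pc: "continuous_on UNIV (partial (\<lambda>y. B 0 y $ i $ j) j)" for i j
      using A3_C2 by (simp add: C2_fun_def C1_fun_def)
    have pc2: "continuous_on (cball 0 R) (\<lambda>x. partial (\<lambda>y. B 0 y $ i $ j) j x)" for i j
      using continuous_on_subset[OF pc[of i j]] by auto
    have "continuous_on (cball 0 R) (\<lambda>x. x \<bullet> divM (B 0) x)" unfolding eq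
      by (intro continuous_intros pc2)
    then have "compact ((\<lambda>x. x \<bullet> divM (B 0) x) ` cball 0 R)" by (rule compact_continuous_image) simp
    then have "bounded ((\<lambda>x. x \<bullet> divM (B 0) x) ` cball 0 R)" by (rule compact_imp_bounded)
    then obtain C where C: "\<forall>v\<in>(\<lambda>x. x \<bullet> divM (B 0) x) ` cball 0 R. norm v \<le> C"
      unfolding bounded_iff by blast
    show ?thesis
    proof (intro exI allI impI)
      fix x :: "real^'n" assume "norm x \<le> R"
      then have "norm (x \<bullet> divM (B 0) x) \<le> C" using C by auto
      then show "x \<bullet> divM (B 0) x \<le> C" by simp
    qed
  qed
  then obtain C2 where C2: "\<And>x. norm x \<le> R \<Longrightarrow> x \<bullet> divM (B 0) x \<le> C2" by blast
  define M0 where "M0 = C0 + max C1 C2"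
  have bnd: "x \<bullet> drift B \<Psi> t x \<le> M0" if "t \<ge> 0" "norm x \<le> R" for t x
  proof -
    have e: "x \<bullet> drift B \<Psi> t x = - (x \<bullet> (B t x *v grad \<Psi> x)) + x \<bullet> divM (B t) x"
      by (simp add: drift_def inner_add_right inner_minus_right inner_diff_right)
    have p: "- (x \<bullet> (B t x *v grad \<Psi> x)) \<le> C0" using psiT[OF that] by linarith
    have d: "x \<bullet> divM (B t) x \<le> max C1 C2"
    proof (cases "t = 0")
      case True
      then show ?thesis using C2[OF that(2)] by simp
    next
      case False
      then have "t > 0" using that(1) by simp
      then show ?thesis using divpos[OF _ that(2)] by fastforce
    qed
    show ?thesis unfolding M0_def using e p d by linarith
  qed
  define VR where "VR = exp (a * sqrt (1 + R\<^sup>2))"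
  define \<rho> where "\<rho> = VR * (a * max M0 0 + K + 1)"
  have VR0: "VR > 0" unfolding VR_def by simp
  have am: "a * max M0 0 \<ge> 0" using a by simp
  have am2: "a * max M0 0 + K + 1 > 0" using am K0 by linarith
  have \<rho>0: "\<rho> > 0" unfolding \<rho>_def using VR0 am2 by simp
  have main: "\<forall>t\<ge>0. \<forall>x. genL B \<Psi> t (Va a) x \<le> - 1 * Va a x + \<rho>"
  proof (intro allI impI)
    fix t :: real and x :: "real^'n" assume t: "t \<ge> 0"
    show "genL B \<Psi> t (Va a) x \<le> - 1 * Va a x + \<rho>"
    proof (cases "norm x \<ge> R")
      case True
      then show ?thesis using farG[OF t True] \<rho>0 by simp
    next
      case False
      have V0: "Va a x > 0" unfolding Va_def by simp
      have pp: "phi x \<ge> 1" by (rule phi_ge1)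
      have "a / phi x * (x \<bullet> drift B \<Psi> t x) \<le> a / phi x * max M0 0"
      proof (rule mult_left_mono)
        have "norm x \<le> R" using False by simp
        from bnd[OF t this] show "x \<bullet> drift B \<Psi> t x \<le> max M0 0" by simp
      qed (use a pp in simp)
      also have "\<dots> \<le> a * max M0 0"
      proof (rule mult_right_mono)
        show "a / phi x \<le> a" using a pp by (simp add: divide_le_eq mult_le_cancel_left1 mult_le_cancel_left)
      qed simp
      finally have "a / phi x * (x \<bullet> drift B \<Psi> t x) + K \<le> a * max M0 0 + K" by simp
      then have g1: "genL B \<Psi> t (Va a) x \<le> Va a x * (a * max M0 0 + K)"
        using key t V0 by (meson less_imp_le mult_left_mono order_trans)
      have VV: "Va a x \<le> VR"
      proof -
        have "(norm x)\<^sup>2 \<le> R\<^sup>2" using False by (intro power_mono) auto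
        then have "sqrt (1 + (norm x)\<^sup>2) \<le> sqrt (1 + R\<^sup>2)" by simp
        then have "a * sqrt (1 + (norm x)\<^sup>2) \<le> a * sqrt (1 + R\<^sup>2)" using a by (intro mult_left_mono) auto
        then show ?thesis unfolding Va_def VR_def by simp
      qed
      have "Va a x * (a * max M0 0 + K) \<le> VR * (a * max M0 0 + K)"
        using VV K0 a by (intro mult_right_mono) auto
      moreover have "VR * (a * max M0 0 + K) = \<rho> - VR" unfolding \<rho>_def by (simp add: algebra_simps)
      ultimately show ?thesis using g1 VV by linarith
    qed
  qed
  show "\<exists>lam>0. \<exists>\<rho>>0. \<forall>t\<ge>0. \<forall>x. genL B \<Psi> t (Va a) x \<le> - lam * Va a x + \<rho>"
    using main \<rho>0 by (intro exI[of _ 1]) auto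
qed
end
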